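(* Let $d\ge1$ and let $P\subseteq\mathbb{R}^d$ be a $d$-dimensional lattice polytope. Then $kP$ is spanning for every integer $k\ge\lfloor\frac{d+1}{2}\rfloor$.
   Context: A lattice polytope is the convex hull of finitely many points of $\mathbb{Z}^d$. A lattice polytope $Q\subseteq\mathbb{R}^d$ is spanning if every point of $\mathbb{Z}^d$ is an affine integral combination of lattice points in $Q$. $kP=\{kx:x\in P\}$. *)

theory Defs
  imports "HOL-Analysis.Analysis"
begin

text \<open>Lattice points of R^d, with R^d rendered as real^'n (d = CARD('n)).\<close>
definition lattice_points :: "(real^'n) set" where
  "lattice_points = {x. \<forall>i. x $ i \<in> \<int>}"

definition lattice_polytope :: "(real^'n) set \<Rightarrow> bool" where
  "lattice_polytope P \<longleftrightarrow>
     (\<exists>S. finite S \<and> S \<subseteq> lattice_points \<and> P = convex hull S)"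

definition spanning :: "(real^'n) set \<Rightarrow> bool" where
  "spanning Q \<longleftrightarrow>
     (\<forall>z \<in> lattice_points. \<exists>T (c :: real^'n \<Rightarrow> int).
        finite T \<and> T \<subseteq> Q \<inter> lattice_points \<and>
        (\<Sum>v\<in>T. c v) = 1 \<and> (\<Sum>v\<in>T. of_int (c v) *\<^sub>R v) = z)"

end

theory Submission
  imports Defs
begin

lemma lp_add: "x \<in> lattice_points \<Longrightarrow> y \<in> lattice_points \<Longrightarrow> x + y \<in> lattice_points"
  by (auto simp: lattice_points_def)
lemma lp_diff: "x \<in> lattice_points \<Longrightarrow> y \<in> lattice_points \<Longrightarrow> x - y \<in> lattice_points"
  by (auto simp: lattice_points_def)
lemma lp_int_scale: "x \<in> lattice_points \<Longrightarrow> of_int n *\<^sub>R x \<in> lattice_points"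
  by (auto simp: lattice_points_def)
lemma lp_nat_scale: "x \<in> lattice_points \<Longrightarrow> real n *\<^sub>R x \<in> lattice_points"
  using lp_int_scale[of x "int n"] by simp
lemma lp_sum: "finite I \<Longrightarrow> (\<forall>i\<in>I. x i \<in> lattice_points) \<Longrightarrow>
   (\<Sum>i\<in>I. of_int (n i) *\<^sub>R x i) \<in> lattice_points"
proof (induction I rule: finite_induct)
  case empty then show ?case by (simp add: lattice_points_def)
next
  case (insert a F) then show ?case by (simp add: lp_add lp_int_scale)
qed

definition iaff :: "(real^'n) set \<Rightarrow> (real^'n) set" where
  "iaff S = {z. \<exists>T (c :: real^'n \<Rightarrow> int). finite T \<and> T \<subseteq> S \<and>
        (\<Sum>v\<in>T. c v) = 1 \<and> (\<Sum>v\<in>T. of_int (c v) *\<^sub>R v) = z}"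

lemma iaff_base: "x \<in> S \<Longrightarrow> x \<in> iaff S"
  unfolding iaff_def by (rule CollectI, rule exI[of _ "{x}"], rule exI[of _ "\<lambda>_. 1"]) auto

lemma ext_sum_int: "finite T \<Longrightarrow> A \<subseteq> T \<Longrightarrow>
  (\<Sum>v\<in>T. (if v \<in> A then c v else 0)) = (\<Sum>v\<in>A. (c v :: int))"
proof -
  assume a: "finite T" "A \<subseteq> T"
  then have "T \<inter> A = A" by auto
  then show ?thesis using sum.inter_restrict[OF a(1), of c A] by simp
qed

lemma ext_sum_vec: "finite T \<Longrightarrow> A \<subseteq> T \<Longrightarrow>
  (\<Sum>v\<in>T. of_int (if v \<in> A then c v else 0) *\<^sub>R v) = (\<Sum>v\<in>A. of_int (c v) *\<^sub>R (v::real^'n))"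
proof -
  assume a: "finite T" "A \<subseteq> T"
  have "(\<Sum>v\<in>T. of_int (if v \<in> A then c v else 0) *\<^sub>R v) =
        (\<Sum>v\<in>T. (if v \<in> A then of_int (c v) *\<^sub>R v else 0))"
    by (rule sum.cong) auto
  also have "\<dots> = (\<Sum>v\<in>A. of_int (c v) *\<^sub>R v)"
  proof -
    have "T \<inter> A = A" using a by auto
    then show ?thesis using sum.inter_restrict[OF a(1), of "\<lambda>v. of_int (c v) *\<^sub>R v" A] by simp
  qed
  finally show ?thesis .
qed

lemma iaff_comb:
  assumes "x \<in> iaff S" "y \<in> iaff S" "w \<in> iaff S"
  shows "x + y - w \<in> iaff S"
proof -
  obtain T1 c1 where 1: "finite T1" "T1 \<subseteq> S" "(\<Sum>v\<in>T1. c1 v) = 1" "(\<Sum>v\<in>T1. of_int (c1 v) *\<^sub>R v) = x"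
    using assms(1) unfolding iaff_def by blast
  obtain T2 c2 where 2: "finite T2" "T2 \<subseteq> S" "(\<Sum>v\<in>T2. c2 v) = 1" "(\<Sum>v\<in>T2. of_int (c2 v) *\<^sub>R v) = y"
    using assms(2) unfolding iaff_def by blast
  obtain T3 c3 where 3: "finite T3" "T3 \<subseteq> S" "(\<Sum>v\<in>T3. c3 v) = 1" "(\<Sum>v\<in>T3. of_int (c3 v) *\<^sub>R v) = w"
    using assms(3) unfolding iaff_def by blast
  define T where "T = T1 \<union> T2 \<union> T3"
  define e1 where "e1 = (\<lambda>v. if v \<in> T1 then c1 v else 0)"
  define e2 where "e2 = (\<lambda>v. if v \<in> T2 then c2 v else 0)"
  define e3 where "e3 = (\<lambda>v. if v \<in> T3 then c3 v else 0)"
  define c where "c = (\<lambda>v. e1 v + e2 v - e3 v)"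
  have fT: "finite T" using 1 2 3 by (simp add: T_def)
  have s1: "sum e1 T = 1" unfolding e1_def using ext_sum_int[OF fT, of T1 c1] 1 by (auto simp: T_def)
  have s2: "sum e2 T = 1" unfolding e2_def using ext_sum_int[OF fT, of T2 c2] 2 by (auto simp: T_def)
  have s3: "sum e3 T = 1" unfolding e3_def using ext_sum_int[OF fT, of T3 c3] 3 by (auto simp: T_def)
  have v1: "(\<Sum>v\<in>T. of_int (e1 v) *\<^sub>R v) = x" unfolding e1_def using ext_sum_vec[OF fT, of T1 c1] 1 by (auto simp: T_def)
  have v2: "(\<Sum>v\<in>T. of_int (e2 v) *\<^sub>R v) = y" unfolding e2_def using ext_sum_vec[OF fT, of T2 c2] 2 by (auto simp: T_def)
  have v3: "(\<Sum>v\<in>T. of_int (e3 v) *\<^sub>R v) = w" unfolding e3_def using ext_sum_vec[OF fT, of T3 c3] 3 by (auto simp: T_def)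
  have "sum c T = 1" unfolding c_def using s1 s2 s3 by (simp add: sum.distrib sum_subtractf)
  moreover have "(\<Sum>v\<in>T. of_int (c v) *\<^sub>R v) = x + y - w"
    unfolding c_def using v1 v2 v3
    by (simp add: scaleR_left_distrib scaleR_left_diff_distrib sum.distrib sum_subtractf)
  moreover have "T \<subseteq> S" using 1 2 3 by (auto simp: T_def)
  ultimately show ?thesis using fT unfolding iaff_def by blast
qed

lemma iaff_line_nat:
  assumes "x \<in> iaff S" "a \<in> iaff S" "b \<in> iaff S"
  shows "x + real m *\<^sub>R (a - b) \<in> iaff S"
proof (induction m)
  case 0 then show ?case using assms by simp
next
  case (Suc m)
  have e: "x + real (Suc m) *\<^sub>R (a - b) = (x + real m *\<^sub>R (a - b)) + a - b"
    by (simp add: algebra_simps)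
  show ?case by (subst e) (rule iaff_comb[OF Suc assms(2,3)])
qed

lemma iaff_line:
  assumes "x \<in> iaff S" "a \<in> iaff S" "b \<in> iaff S"
  shows "x + of_int n *\<^sub>R (a - b) \<in> iaff S"
proof (cases "n \<ge> 0")
  case True
  then obtain m where "n = int m" by (metis nonneg_int_cases)
  then show ?thesis using iaff_line_nat[OF assms, of m] by simp
next
  case False
  then obtain m where m: "n = - int m" by (metis nle_le nonpos_int_cases)
  have "of_int n *\<^sub>R (a - b) = real m *\<^sub>R (b - a)" using m by (simp add: algebra_simps)
  then show ?thesis using iaff_line_nat[OF assms(1,3,2), of m] by simp
qed

lemma iaff_sum:
  assumes "finite I" "x \<in> iaff S" "b \<in> iaff S" "\<forall>i\<in>I. a i \<in> iaff S"
  shows "x + (\<Sum>i\<in>I. of_int (n i) *\<^sub>R (a i - b)) \<in> iaff S"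
  using assms(1,4)
proof (induction I rule: finite_induct)
  case empty then show ?case using assms(2) by simp
next
  case (insert i F)
  have e: "x + (\<Sum>j\<in>insert i F. of_int (n j) *\<^sub>R (a j - b)) =
     (x + (\<Sum>j\<in>F. of_int (n j) *\<^sub>R (a j - b))) + of_int (n i) *\<^sub>R (a i - b)"
    using insert by (simp add: algebra_simps)
  show ?case by (subst e) (rule iaff_line, use insert assms(3) in auto)
qed

lemma in_scaled_hull:
  fixes v0 :: "real^'n" and k :: real
  assumes fin: "finite B'" and nv: "v0 \<notin> B'" and sub: "insert v0 B' \<subseteq> S"
    and kpos: "k > 0" and nn: "\<forall>v\<in>B'. 0 \<le> l v" and sl: "sum l B' \<le> k"
  shows "k *\<^sub>R v0 + (\<Sum>v\<in>B'. l v *\<^sub>R (v - v0)) \<in> (\<lambda>x. k *\<^sub>R x) ` (convex hull S)"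
proof -
  define u where "u = (\<lambda>x. if x = v0 then 1 - sum l B' / k else l x / k)"
  define q where "q = (\<Sum>x\<in>insert v0 B'. u x *\<^sub>R x)"
  have uB: "\<And>x. x \<in> B' \<Longrightarrow> u x = l x / k" using nv by (auto simp: u_def)
  have "\<forall>x\<in>insert v0 B'. 0 \<le> u x"
    using nn kpos sl by (auto simp: u_def field_simps)
  moreover have "sum u (insert v0 B') = 1"
  proof -
    have "sum u (insert v0 B') = u v0 + sum u B'" using fin nv by simp
    also have "sum u B' = sum l B' / k" using uB by (simp add: sum_divide_distrib)
    finally show ?thesis by (simp add: u_def)
  qed
  ultimately have "q \<in> convex hull (insert v0 B')"
    unfolding q_def using convex_hull_finite[of "insert v0 B'"] fin by auto
  then have qS: "q \<in> convex hull S" using hull_mono[OF sub] by blast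
  have "k *\<^sub>R q = k *\<^sub>R v0 + (\<Sum>v\<in>B'. l v *\<^sub>R (v - v0))"
  proof -
    have "q = u v0 *\<^sub>R v0 + (\<Sum>x\<in>B'. u x *\<^sub>R x)" unfolding q_def using fin nv by simp
    also have "(\<Sum>x\<in>B'. u x *\<^sub>R x) = (\<Sum>x\<in>B'. (l x / k) *\<^sub>R x)" using uB by simp
    finally have q: "q = u v0 *\<^sub>R v0 + (\<Sum>x\<in>B'. (l x / k) *\<^sub>R x)" .
    have ku: "k * u v0 = k - sum l B'" using kpos by (simp add: u_def field_simps)
    have ks: "k *\<^sub>R (\<Sum>x\<in>B'. (l x / k) *\<^sub>R x) = (\<Sum>x\<in>B'. l x *\<^sub>R x)"
      using kpos by (simp add: scaleR_sum_right)
    have "k *\<^sub>R q = (k * u v0) *\<^sub>R v0 + k *\<^sub>R (\<Sum>x\<in>B'. (l x / k) *\<^sub>R x)"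
      unfolding q by (simp add: scaleR_right_distrib)
    then have "k *\<^sub>R q = (k - sum l B') *\<^sub>R v0 + (\<Sum>x\<in>B'. l x *\<^sub>R x)"
      using ku ks by simp
    also have "\<dots> = k *\<^sub>R v0 + (\<Sum>v\<in>B'. l v *\<^sub>R (v - v0))"
      by (simp add: scaleR_right_diff_distrib sum_subtractf scaleR_left_diff_distrib scaleR_sum_left algebra_simps)
    finally show ?thesis .
  qed
  then show ?thesis using qS by (metis image_eqI)
qed


theorem mainTheorem5:
  fixes P :: "(real^'n) set" and k :: nat
  assumes "lattice_polytope P"
    and "aff_dim P = int CARD('n)"
    and "k \<ge> (CARD('n) + 1) div 2"
  shows "spanning ((\<lambda>x. real k *\<^sub>R x) ` P)"
proof -
  let ?d = "CARD('n)"
  let ?Q = "(\<lambda>x. real k *\<^sub>R x) ` P"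
  obtain S where S: "finite S" "S \<subseteq> lattice_points" "P = convex hull S"
    using assms(1) unfolding lattice_polytope_def by blast
  have affS: "aff_dim S = int ?d" using assms(2) S(3) aff_dim_convex_hull by metis
  obtain B where B: "B \<subseteq> S" "\<not> affine_dependent B" "affine hull S = affine hull B"
    using affine_basis_exists by blast
  have "aff_dim B = int ?d" using affS B(3) by (metis aff_dim_affine_hull)
  hence cB: "card B = ?d + 1" using aff_dim_affine_independent[OF B(2)] by simp
  have finB: "finite B" using B(1) S(1) finite_subset by blast
  have "B \<noteq> {}" using cB by auto
  then obtain v0 where v0: "v0 \<in> B" by blast
  define B' where "B' = B - {v0}"
  have finB': "finite B'" using finB by (simp add: B'_def)
  have nv: "v0 \<notin> B'" by (simp add: B'_def)
  have insB: "insert v0 B' = B" using v0 by (auto simp: B'_def)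
  have cB': "card B' = ?d" using cB v0 finB by (simp add: B'_def card_Diff_singleton)
  define U where "U = (\<lambda>x. -v0 + x) ` B'"
  have indU: "\<not> dependent U" using B(2) affine_dependent_iff_dependent[OF nv] insB
    unfolding U_def by simp
  have injU: "inj_on (\<lambda>x. -v0 + x) B'" by (auto simp: inj_on_def)
  have cU: "card U = ?d" using card_image[OF injU] cB' U_def by simp
  have finU: "finite U" using finB' U_def by simp
  have spanU: "span U = UNIV"
    using card_eq_dim[of U UNIV] indU cU finU by (simp add: dim_UNIV top_le)
  have d1: "?d \<ge> 1" by (simp add: Suc_leI)
  have k1: "k \<ge> 1" using assms(3) d1 by linarith
  have dk: "real ?d \<le> 2 * real k"
  proof -
    have "?d \<le> 2 * ((?d + 1) div 2)" by presburger
    then show ?thesis using assms(3) by linarith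
  qed
  have lpS: "\<And>v. v \<in> B \<Longrightarrow> v \<in> lattice_points" using B(1) S(2) by blast
  define p0 where "p0 = real k *\<^sub>R v0"
  define p where "p = (\<lambda>v. p0 + (v - v0))"
  have hullmem: "p0 + (\<Sum>v\<in>B'. l v *\<^sub>R (v - v0)) \<in> ?Q"
    if "\<forall>v\<in>B'. 0 \<le> l v" "sum l B' \<le> real k" for l
    unfolding p0_def S(3)
    by (rule in_scaled_hull[OF finB' nv _ _ that]) (use insB B(1) k1 in auto)
  have p0lp: "p0 \<in> lattice_points" unfolding p0_def using lpS[OF v0] by (rule lp_nat_scale)
  have p0Q: "p0 \<in> ?Q" using hullmem[of "\<lambda>_. 0"] by simp
  have plp: "p v \<in> lattice_points" if "v \<in> B'" for v
    unfolding p_def using that p0lp lpS[OF v0] lpS[of v] by (auto simp: B'_def intro!: lp_add lp_diff)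
  have pQ: "p v \<in> ?Q" if v: "v \<in> B'" for v
  proof -
    have e: "\<And>u. (if u = v then 1 else 0) *\<^sub>R (u - v0) = (if u = v then u - v0 else 0)" by simp
    have "sum (\<lambda>u. if u = v then 1 else 0) B' = (1::real)" using v finB' by simp
    then have "p0 + (\<Sum>u\<in>B'. (if u = v then 1 else 0) *\<^sub>R (u - v0)) \<in> ?Q"
      using hullmem[of "\<lambda>u. if u = v then 1 else 0"] k1 by simp
    then show ?thesis using v finB' unfolding e p_def by simp
  qed
  let ?L = "iaff (?Q \<inter> lattice_points)"
  have p0L: "p0 \<in> ?L" using p0Q p0lp by (intro iaff_base) auto
  have pL: "\<forall>v\<in>B'. p v \<in> ?L" using pQ plp by (auto intro: iaff_base)
  have pd: "\<And>v. p v - p0 = v - v0" by (simp add: p_def)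
  have key: "z \<in> ?L" if z: "z \<in> lattice_points" for z
  proof -
    have "z - real k *\<^sub>R v0 \<in> span U" using spanU by simp
    then obtain c where c: "z - real k *\<^sub>R v0 = (\<Sum>u\<in>U. c u *\<^sub>R u)"
      using span_finite[OF finU] by auto
    define \<mu> where "\<mu> = (\<lambda>v. c (-v0 + v))"
    have "(\<Sum>u\<in>U. c u *\<^sub>R u) = (\<Sum>v\<in>B'. c (-v0 + v) *\<^sub>R (-v0 + v))"
      unfolding U_def by (simp only: sum.reindex[OF injU] comp_def)
    then have zrep: "z = p0 + (\<Sum>v\<in>B'. \<mu> v *\<^sub>R (v - v0))"
      using c unfolding \<mu>_def p0_def by (simp add: algebra_simps)
    have elp: "\<forall>v\<in>B'. v - v0 \<in> lattice_points"
      using lpS v0 by (auto simp: B'_def intro!: lp_diff)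
    define f where "f = (\<lambda>v. \<mu> v - of_int (floor (\<mu> v)))"
    define g where "g = (\<lambda>v. of_int (ceiling (\<mu> v)) - \<mu> v)"
    have "sum f B' + sum g B' = (\<Sum>v\<in>B'. of_int (ceiling (\<mu> v)) - of_int (floor (\<mu> v)))"
      unfolding f_def g_def by (simp add: sum.distrib[symmetric])
    also have "\<dots> \<le> (\<Sum>v\<in>B'. (1::real))"
    proof (rule sum_mono)
      fix v
      have "ceiling (\<mu> v) - floor (\<mu> v) \<le> 1" by (rule ceiling_diff_floor_le_1)
      then show "real_of_int (ceiling (\<mu> v)) - real_of_int (floor (\<mu> v)) \<le> 1" by linarith
    qed
    finally have "sum f B' + sum g B' \<le> real ?d" using cB' by simp
    then have cases: "sum f B' \<le> real k \<or> sum g B' \<le> real k" using dk by linarith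
    show ?thesis
    proof (cases "sum f B' \<le> real k")
      case True
      define w where "w = p0 + (\<Sum>v\<in>B'. f v *\<^sub>R (v - v0))"
      have wQ: "w \<in> ?Q" unfolding w_def
        by (rule hullmem) (use True in \<open>auto simp: f_def of_int_floor_le\<close>)
      have weq: "w = z - (\<Sum>v\<in>B'. of_int (floor (\<mu> v)) *\<^sub>R (v - v0))"
        unfolding w_def zrep f_def by (simp add: scaleR_left_diff_distrib sum_subtractf)
      have wlp: "w \<in> lattice_points" unfolding weq
        by (rule lp_diff[OF z lp_sum[OF finB' elp]])
      have wL: "w \<in> ?L" using wQ wlp by (intro iaff_base) auto
      have zeq: "z = w + (\<Sum>v\<in>B'. of_int (floor (\<mu> v)) *\<^sub>R (p v - p0))"
        unfolding pd weq by simp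
      show ?thesis unfolding zeq by (rule iaff_sum[OF finB' wL p0L pL])
    next
      case False
      then have gk: "sum g B' \<le> real k" using cases by simp
      define w where "w = p0 + (\<Sum>v\<in>B'. g v *\<^sub>R (v - v0))"
      have wQ: "w \<in> ?Q" unfolding w_def
        by (rule hullmem) (use gk in \<open>auto simp: g_def le_of_int_ceiling\<close>)
      have weq: "w = p0 + p0 - z + (\<Sum>v\<in>B'. of_int (ceiling (\<mu> v)) *\<^sub>R (v - v0))"
        unfolding w_def zrep g_def by (simp add: scaleR_left_diff_distrib sum_subtractf)
      have wlp: "w \<in> lattice_points" unfolding weq
        by (intro lp_add lp_diff p0lp z lp_sum[OF finB' elp])
      have wL: "w \<in> ?L" using wQ wlp by (intro iaff_base) auto
      have xL: "p0 + p0 - w \<in> ?L" by (rule iaff_comb[OF p0L p0L wL])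
      have zeq: "z = (p0 + p0 - w) + (\<Sum>v\<in>B'. of_int (ceiling (\<mu> v)) *\<^sub>R (p v - p0))"
        unfolding pd weq by simp
      show ?thesis unfolding zeq by (rule iaff_sum[OF finB' xL p0L pL])
    qed
  qed
  show ?thesis unfolding spanning_def
    using key unfolding iaff_def by blast
qed

end
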